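(* Let $m,n,k$ be positive integers and $i,j$ non-negative integers such that $i<\frac{n}{2}-1$ and $j<\frac{k}{2}-1$. Then $$|\mathrm{WHom}^{ij}(P_m,P_n\square P_k)|=\sum_{h=0}^{m-1}\binom{m-1}{h}\,|\mathrm{Hom}^i(P_{h+1},P_n)|\,|\mathrm{WHom}^j(P_{m-h},P_k)|.$$
   Context: For a positive integer $n$, $P_n$ denotes the path with vertex set $\{0,1,\dots,n-1\}$ and edge set $\{\{i,i+1\} : i=0,\dots,n-2\}$. The Cartesian product $P_n\square P_k$ has vertex set $\{0,\dots,n-1\}\times\{0,\dots,k-1\}$, with $\{(a,u),(b,v)\}$ an edge iff either $a=b$ and $\{u,v\}\in E(P_k)$, or $\{a,b\}\in E(P_n)$ and $u=v$. A homomorphism $f:G\to H$ is a map $V(G)\to V(H)$ with $\{f(x),f(y)\}\in E(H)$ for all $\{x,y\}\in E(G)$; a weak homomorphism is a map with $f(x)=f(y)$ or $\{f(x),f(y)\}\in E(H)$ for all $\{x,y\}\in E(G)$. $\mathrm{Hom}^i(P_a,P_n)$ is the set of homomorphisms $f:P_a\to P_n$ with $f(0)=i$; $\mathrm{WHom}^j(P_a,P_k)$ is the set of weak homomorphisms $f:P_a\to P_k$ with $f(0)=j$; $\mathrm{WHom}^{ij}(P_m,P_n\square P_k)$ is the set of weak homomorphisms $f:P_m\to P_n\square P_k$ with $f(0)=(i,j)$. *)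

theory Defs
  imports "HOL-Library.FuncSet"
begin

definition path_adj :: "nat \<Rightarrow> nat \<Rightarrow> nat \<Rightarrow> bool" where
  "path_adj n u v \<longleftrightarrow> u < n \<and> v < n \<and> (u + 1 = v \<or> v + 1 = u)"

definition prod_adj :: "nat \<Rightarrow> nat \<Rightarrow> nat \<times> nat \<Rightarrow> nat \<times> nat \<Rightarrow> bool" where
  "prod_adj n k x y \<longleftrightarrow>
     (fst x = fst y \<and> fst x < n \<and> path_adj k (snd x) (snd y)) \<or>
     (path_adj n (fst x) (fst y) \<and> snd x = snd y \<and> snd x < k)"

definition Hom_path :: "nat \<Rightarrow> nat \<Rightarrow> nat \<Rightarrow> (nat \<Rightarrow> nat) set" where
  "Hom_path a n i = {f \<in> {0..<a} \<rightarrow>\<^sub>E {0..<n}. f 0 = i \<and>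
      (\<forall>x. x + 1 < a \<longrightarrow> path_adj n (f x) (f (x + 1)))}"

definition WHom_path :: "nat \<Rightarrow> nat \<Rightarrow> nat \<Rightarrow> (nat \<Rightarrow> nat) set" where
  "WHom_path a k j = {f \<in> {0..<a} \<rightarrow>\<^sub>E {0..<k}. f 0 = j \<and>
      (\<forall>x. x + 1 < a \<longrightarrow> f x = f (x + 1) \<or> path_adj k (f x) (f (x + 1)))}"

definition WHom_grid :: "nat \<Rightarrow> nat \<Rightarrow> nat \<Rightarrow> nat \<Rightarrow> nat \<Rightarrow> (nat \<Rightarrow> nat \<times> nat) set" where
  "WHom_grid m n k i j = {f \<in> {0..<m} \<rightarrow>\<^sub>E ({0..<n} \<times> {0..<k}). f 0 = (i, j) \<and>
      (\<forall>x. x + 1 < m \<longrightarrow> f x = f (x + 1) \<or> prod_adj n k (f x) (f (x + 1)))}"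

end

theory Submission
  imports Defs
begin

definition Walks :: "('a \<Rightarrow> 'a \<Rightarrow> bool) \<Rightarrow> 'a set \<Rightarrow> nat \<Rightarrow> 'a \<Rightarrow> (nat \<Rightarrow> 'a) set" where
  "Walks R A m a = {f \<in> {0..<m} \<rightarrow>\<^sub>E A. f 0 = a \<and> (\<forall>x. x + 1 < m \<longrightarrow> R (f x) (f (x + 1)))}"

lemma Walks_finite: "finite A \<Longrightarrow> finite (Walks R A m a)"
proof -
  assume "finite A"
  have "Walks R A m a \<subseteq> {0..<m} \<rightarrow>\<^sub>E A" unfolding Walks_def by auto
  moreover have "finite ({0..<m} \<rightarrow>\<^sub>E A)" using \<open>finite A\<close> by (intro finite_PiE) auto
  ultimately show ?thesis by (rule finite_subset)
qed

lemma Walks_one: "a \<in> A \<Longrightarrow> Walks R A (Suc 0) a = {\<lambda>x. if x = 0 then a else undefined}"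
  unfolding Walks_def
  by (auto simp: PiE_def extensional_def)

lemma Walks_Suc:
  assumes "a \<in> A"
  shows "Walks R A (Suc (Suc m)) a = (\<Union>s\<in>{s\<in>A. R a s}. case_nat a ` Walks R A (Suc m) s)"
proof
  show "Walks R A (Suc (Suc m)) a \<subseteq> (\<Union>s\<in>{s\<in>A. R a s}. case_nat a ` Walks R A (Suc m) s)"
  proof
    fix f assume f: "f \<in> Walks R A (Suc (Suc m)) a"
    define g where "g = (\<lambda>y. f (Suc y))"
    have fe: "f = case_nat a g"
    proof
      fix x show "f x = case_nat a g x" using f unfolding g_def Walks_def by (cases x) auto
    qed
    have "g \<in> Walks R A (Suc m) (f 1)"
      using f unfolding g_def Walks_def by (auto simp: PiE_def extensional_def Pi_def)
    moreover have "f 1 \<in> A" "R a (f 1)" using f unfolding Walks_def by (auto simp: PiE_def Pi_def)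
    ultimately show "f \<in> (\<Union>s\<in>{s\<in>A. R a s}. case_nat a ` Walks R A (Suc m) s)"
      using fe by blast
  qed
next
  show "(\<Union>s\<in>{s\<in>A. R a s}. case_nat a ` Walks R A (Suc m) s) \<subseteq> Walks R A (Suc (Suc m)) a"
  proof clarify
    fix s g assume s: "s \<in> A" "R a s" and g: "g \<in> Walks R A (Suc m) s"
    show "case_nat a g \<in> Walks R A (Suc (Suc m)) a"
      unfolding Walks_def
    proof (intro CollectI conjI allI impI)
      show "case_nat a g \<in> {0..<Suc (Suc m)} \<rightarrow>\<^sub>E A"
        using g assms unfolding Walks_def
        by (auto simp: PiE_def extensional_def Pi_def split: nat.splits)
      show "case_nat a g 0 = a" by simp
      fix x assume "x + 1 < Suc (Suc m)"
      then show "R (case_nat a g x) (case_nat a g (x + 1))"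
        using g s unfolding Walks_def by (cases x) auto
    qed
  qed
qed

lemma Walks_Suc_card:
  assumes "a \<in> A" "finite A"
  shows "card (Walks R A (Suc (Suc m)) a) = (\<Sum>s\<in>{s\<in>A. R a s}. card (Walks R A (Suc m) s))"
proof -
  have inj: "inj (case_nat a :: (nat \<Rightarrow> 'a) \<Rightarrow> nat \<Rightarrow> 'a)"
  proof (rule injI)
    fix g h :: "nat \<Rightarrow> 'a" assume "case_nat a g = case_nat a h"
    then have "\<And>y. case_nat a g (Suc y) = case_nat a h (Suc y)" by simp
    then show "g = h" by auto
  qed
  have "card (Walks R A (Suc (Suc m)) a) = (\<Sum>s\<in>{s\<in>A. R a s}. card (case_nat a ` Walks R A (Suc m) s))"
    unfolding Walks_Suc[OF assms(1)]
  proof (rule card_UN_disjoint)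
    show "finite {s \<in> A. R a s}" using assms by auto
    show "\<forall>i\<in>{s \<in> A. R a s}. finite (case_nat a ` Walks R A (Suc m) i)"
      using Walks_finite[OF assms(2)] by auto
    show "\<forall>i\<in>{s \<in> A. R a s}. \<forall>j\<in>{s \<in> A. R a s}. i \<noteq> j \<longrightarrow>
      case_nat a ` Walks R A (Suc m) i \<inter> case_nat a ` Walks R A (Suc m) j = {}"
      unfolding Walks_def by (auto dest!: injD[OF inj])
  qed
  also have "\<dots> = (\<Sum>s\<in>{s\<in>A. R a s}. card (Walks R A (Suc m) s))"
    by (intro sum.cong refl card_image inj_on_subset[OF inj]) auto
  finally show ?thesis .
qed

lemma Hom_eq: "Hom_path a n i = Walks (path_adj n) {0..<n} a i"
  unfolding Hom_path_def Walks_def by simp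

lemma WHom_eq: "WHom_path a k j = Walks (\<lambda>u v. u = v \<or> path_adj k u v) {0..<k} a j"
  unfolding WHom_path_def Walks_def by simp

lemma Grid_eq: "WHom_grid m n k i j = Walks (\<lambda>u v. u = v \<or> prod_adj n k u v) ({0..<n} \<times> {0..<k}) m (i, j)"
  unfolding WHom_grid_def Walks_def by simp


lemma pascal_sum:
  fixes X :: "nat \<Rightarrow> nat"
  shows "(\<Sum>h=0..Suc M. (Suc M choose h) * X h) =
    (\<Sum>h=0..M. (M choose h) * X h) + (\<Sum>h=0..M. (M choose h) * X (Suc h))"
proof -
  have "(\<Sum>h=0..Suc M. (Suc M choose h) * X h) = X 0 + (\<Sum>h=0..M. (Suc M choose Suc h) * X (Suc h))"
    by (subst sum.atLeast0_atMost_Suc_shift) simp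
  also have "\<dots> = X 0 + (\<Sum>h=0..M. (M choose Suc h) * X (Suc h)) + (\<Sum>h=0..M. (M choose h) * X (Suc h))"
    by (simp add: sum.distrib algebra_simps)
  also have "X 0 + (\<Sum>h=0..M. (M choose Suc h) * X (Suc h)) = (\<Sum>h=0..Suc M. (M choose h) * X h)"
    by (subst sum.atLeast0_atMost_Suc_shift) simp
  also have "\<dots> = (\<Sum>h=0..M. (M choose h) * X h)"
    by (subst sum.atLeast0_atMost_Suc) simp
  finally show ?thesis .
qed

lemma grid_nbrs:
  assumes "a < n" "b < k"
  shows "{s \<in> {0..<n} \<times> {0..<k}. (a, b) = s \<or> prod_adj n k (a, b) s} =
    (\<lambda>a'. (a', b)) ` {a' \<in> {0..<n}. path_adj n a a'} \<union> (\<lambda>b'. (a, b')) ` {b' \<in> {0..<k}. b = b' \<or> path_adj k b b'}"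
  using assms unfolding prod_adj_def path_adj_def by auto

lemma main:
  fixes n k :: nat
  assumes "a < n" "b < k"
  shows "card (Walks (\<lambda>u v. u = v \<or> prod_adj n k u v) ({0..<n} \<times> {0..<k}) (Suc M) (a, b)) =
    (\<Sum>h = 0..M. (M choose h) * card (Walks (path_adj n) {0..<n} (h + 1) a) *
        card (Walks (\<lambda>u v. u = v \<or> path_adj k u v) {0..<k} (Suc M - h) b))"
  using assms
proof (induction M arbitrary: a b)
  case 0
  then show ?case by (simp add: Walks_one)
next
  case (Suc M)
  define G where "G = (\<lambda>m s. card (Walks (\<lambda>u v. u = v \<or> prod_adj n k u v) ({0..<n} \<times> {0..<k}) m s))"
  define H where "H = (\<lambda>m a. card (Walks (path_adj n) {0..<n} m a))"
  define W where "W = (\<lambda>m b. card (Walks (\<lambda>u v. u = v \<or> path_adj k u v) {0..<k} m b))"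
  define Na where "Na = {a' \<in> {0..<n}. path_adj n a a'}"
  define Nb where "Nb = {b' \<in> {0..<k}. b = b' \<or> path_adj k b b'}"
  have fin: "finite Na" "finite Nb" unfolding Na_def Nb_def by auto
  have IH: "\<And>a b. a < n \<Longrightarrow> b < k \<Longrightarrow> G (Suc M) (a, b) = (\<Sum>h = 0..M. (M choose h) * H (h + 1) a * W (Suc M - h) b)"
    using Suc.IH unfolding G_def H_def W_def by blast
  have Hs: "\<And>h. H (Suc (Suc h)) a = (\<Sum>a'\<in>Na. H (Suc h) a')"
    unfolding H_def Na_def using Suc.prems by (intro Walks_Suc_card) auto
  have Ws: "\<And>h. W (Suc (Suc h)) b = (\<Sum>b'\<in>Nb. W (Suc h) b')"
    unfolding W_def Nb_def using Suc.prems Walks_Suc_card[of b "{0..<k}" "\<lambda>u v. u = v \<or> path_adj k u v"] by simp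
  have "G (Suc (Suc M)) (a, b) = (\<Sum>s\<in>{s \<in> {0..<n} \<times> {0..<k}. (a, b) = s \<or> prod_adj n k (a, b) s}. G (Suc M) s)"
    unfolding G_def using Suc.prems Walks_Suc_card[of "(a, b)" "{0..<n} \<times> {0..<k}" "\<lambda>u v. u = v \<or> prod_adj n k u v"] by simp
  also have "\<dots> = (\<Sum>s\<in>(\<lambda>a'. (a', b)) ` Na \<union> (\<lambda>b'. (a, b')) ` Nb. G (Suc M) s)"
    unfolding Na_def Nb_def using grid_nbrs[OF Suc.prems] by simp
  also have "\<dots> = (\<Sum>s\<in>(\<lambda>a'. (a', b)) ` Na. G (Suc M) s) + (\<Sum>s\<in>(\<lambda>b'. (a, b')) ` Nb. G (Suc M) s)"
    by (rule sum.union_disjoint) (use fin in \<open>auto simp: Na_def path_adj_def\<close>)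
  also have "\<dots> = (\<Sum>a'\<in>Na. G (Suc M) (a', b)) + (\<Sum>b'\<in>Nb. G (Suc M) (a, b'))"
    by (simp add: sum.reindex inj_on_def)
  also have "\<dots> = (\<Sum>a'\<in>Na. \<Sum>h = 0..M. (M choose h) * H (h + 1) a' * W (Suc M - h) b) +
      (\<Sum>b'\<in>Nb. \<Sum>h = 0..M. (M choose h) * H (h + 1) a * W (Suc M - h) b')"
    using Suc.prems by (intro arg_cong2[where f="(+)"] sum.cong refl IH) (auto simp: Na_def Nb_def)
  also have "\<dots> = (\<Sum>h = 0..M. (M choose h) * H (Suc (Suc h)) a * W (Suc M - h) b) +
      (\<Sum>h = 0..M. (M choose h) * H (h + 1) a * W (Suc (Suc M) - h) b)"
  proof -
    have 1: "(\<Sum>a'\<in>Na. \<Sum>h = 0..M. (M choose h) * H (h + 1) a' * W (Suc M - h) b) =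
       (\<Sum>h = 0..M. (M choose h) * H (Suc (Suc h)) a * W (Suc M - h) b)"
      by (subst sum.swap) (simp add: Hs sum_distrib_left sum_distrib_right)
    have 2: "(\<Sum>b'\<in>Nb. \<Sum>h = 0..M. (M choose h) * H (h + 1) a * W (Suc M - h) b') =
       (\<Sum>h = 0..M. (M choose h) * H (h + 1) a * W (Suc (Suc M) - h) b)"
    proof (subst sum.swap, intro sum.cong refl)
      fix h assume "h \<in> {0..M}"
      then have e: "Suc (Suc M) - h = Suc (Suc (M - h))" "Suc M - h = Suc (M - h)" by auto
      show "(\<Sum>b'\<in>Nb. (M choose h) * H (h + 1) a * W (Suc M - h) b') = (M choose h) * H (h + 1) a * W (Suc (Suc M) - h) b"
        unfolding e Ws by (simp add: sum_distrib_left)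
    qed
    show ?thesis using 1 2 by simp
  qed
  also have "\<dots> = (\<Sum>h = 0..Suc M. (Suc M choose h) * (H (h + 1) a * W (Suc (Suc M) - h) b))"
    using pascal_sum[of M "\<lambda>h. H (h + 1) a * W (Suc (Suc M) - h) b"] by (simp add: mult.assoc add.commute)
  finally show ?case unfolding G_def H_def W_def by (simp add: mult.assoc)
qed

theorem theorem3:
  fixes m n k i j :: nat
  assumes "m > 0" "n > 0" "k > 0"
    and "2 * i + 2 < n" and "2 * j + 2 < k"
  shows "card (WHom_grid m n k i j) =
    (\<Sum>h = 0..m - 1. ((m - 1) choose h) * card (Hom_path (h + 1) n i) * card (WHom_path (m - h) k j))"
proof -
  have i: "i < n" and j: "j < k" using assms by auto
  obtain M where M: "m = Suc M" using assms(1) by (cases m) auto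
  show ?thesis unfolding Grid_eq Hom_eq WHom_eq M using main[OF i j, of M] by simp
qed

end
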